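(* Let Assumption A hold and let $\pi=\pi^{\mathrm{priv}}\otimes\pi^{\mathrm{pub}}$ with $\pi^{\mathrm{priv}}$ the histogram partition with $t$ bins per coordinate and $\pi^{\mathrm{pub}}$ a max-edge partition of depth $p$ (possibly constructed from the data). There is $N$ depending only on $d$ such that for all $n\ge N$, if $(X_1,Y_1),\dots,(X_n,Y_n)$ are i.i.d. from $\mathrm P$, then with probability at least $1-1/n^2$, for every cell $A\in\pi$, $$\Big|\frac1n\sum_{i=1}^n\mathbf 1\{X_i\in A\}-\int_A d\mathrm P_X\Big|\le\sqrt{\frac{\overline c\, t^{-s}\,2^{1-p}(4d+5)\log n}{n}}+\frac{2(4d+5)\log n}{3n}+\frac4n.$$
   Context: $\mathrm P$ is a distribution on $[0,1]^d\times[-M,M]$. Assumption A: $\mathrm P_X$ has density in $[\underline c,\overline c]$, $\underline c>0$, and $f^*(x)=\mathbb E[Y|X=x]$ is $\alpha$-Hölder. Partition: fix $s\in\{0,\dots,d-1\}$; $\pi^{\mathrm{priv}}$ partitions coordinates $1,\dots,s$ into $t^s$ cubes of side $1/t$ (products of $[m/t,(m+1)/t)$); $\pi^{\mathrm{pub}}$ is a max-edge partition of depth $p$ of coordinates $s+1,\dots,d$: from $[0,1]^{d-s}$, in each of $p$ rounds every cell is halved at the midpoint of one of its longest edges (choice among longest edges by any rule, possibly data-dependent). Cells of $\pi$ are the axis-aligned rectangles $A\times B$, each of Lebesgue volume $t^{-s}2^{-p}$. *)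

theory Defs
  imports "HOL-Probability.Probability"
begin

text \<open>Points of [0,1]^d are represented as functions nat => real, coordinates 0..d-1
  (paper coordinates 1..d), living in the space of PiM {..<d} (\<lambda>_. lborel).
  Private coordinates: 0..s-1; public coordinates: s..d-1.\<close>

abbreviation Xspace :: "nat \<Rightarrow> (nat \<Rightarrow> real) measure" where
  "Xspace d \<equiv> PiM {..<d} (\<lambda>_. lborel)"

definition unit_cube :: "nat \<Rightarrow> (nat \<Rightarrow> real) set" where
  "unit_cube d = {x \<in> space (Xspace d). \<forall>i<d. 0 \<le> x i \<and> x i \<le> 1}"

text \<open>Public max-edge cells of depth p, described by lower/upper corner vectors (a,b) on
  coordinates s..d-1: starting from [0,1)^(d-s), in each round a cell is halved at the
  midpoint of one of its longest edges. This inductive set contains every cell of every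
  max-edge partition of depth p (for any, possibly data-dependent, splitting rule).\<close>

inductive maxedge_cell :: "nat \<Rightarrow> nat \<Rightarrow> nat \<Rightarrow> (nat \<Rightarrow> real) \<Rightarrow> (nat \<Rightarrow> real) \<Rightarrow> bool"
  for d s where
  root: "maxedge_cell d s 0 (\<lambda>_. 0) (\<lambda>_. 1)"
| left: "\<lbrakk> maxedge_cell d s p a b; j \<in> {s..<d};
          b j - a j = Max ((\<lambda>i. b i - a i) ` {s..<d}) \<rbrakk>
        \<Longrightarrow> maxedge_cell d s (Suc p) a (b(j := (a j + b j) / 2))"
| right: "\<lbrakk> maxedge_cell d s p a b; j \<in> {s..<d};
          b j - a j = Max ((\<lambda>i. b i - a i) ` {s..<d}) \<rbrakk>
        \<Longrightarrow> maxedge_cell d s (Suc p) (a(j := (a j + b j) / 2)) b"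

definition cells :: "nat \<Rightarrow> nat \<Rightarrow> nat \<Rightarrow> nat \<Rightarrow> (nat \<Rightarrow> real) set set" where
  "cells d s t p =
     {{x \<in> space (Xspace d).
         (\<forall>i<s. real (m i) / real t \<le> x i \<and> x i < (real (m i) + 1) / real t) \<and>
         (\<forall>i\<in>{s..<d}. a i \<le> x i \<and> x i < b i)}
      | m a b. (\<forall>i<s. m i < t) \<and> maxedge_cell d s p a b}"

definition assumption_A ::
  "nat \<Rightarrow> ((nat \<Rightarrow> real) \<times> real) measure \<Rightarrow> real \<Rightarrow> real \<Rightarrow> real \<Rightarrow> bool" where
  "assumption_A d P M c_lo c_hi \<longleftrightarrow>
     prob_space P \<and> sets P = sets (Xspace d \<Otimes>\<^sub>M lborel) \<and> M > 0 \<and>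
     (AE z in P. fst z \<in> unit_cube d \<and> \<bar>snd z\<bar> \<le> M) \<and>
     0 < c_lo \<and> c_lo \<le> c_hi \<and>
     (\<exists>g. g \<in> borel_measurable (Xspace d) \<and>
          distr P (Xspace d) fst = density (Xspace d) (\<lambda>x. ennreal (g x)) \<and>
          (\<forall>x. x \<notin> unit_cube d \<longrightarrow> g x = 0) \<and>
          (\<forall>x\<in>unit_cube d. c_lo \<le> g x \<and> g x \<le> c_hi)) \<and>
     (\<exists>f L \<alpha>. f \<in> borel_measurable (Xspace d) \<and>
          (\<forall>A\<in>sets (Xspace d).
              (\<integral>z. indicator A (fst z) * snd z \<partial>P) =
              (\<integral>x. indicator A x * f x \<partial>distr P (Xspace d) fst)) \<and>
          0 < \<alpha> \<and> \<alpha> \<le> 1 \<and> 0 \<le> L \<and>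
          (\<forall>x\<in>unit_cube d. \<forall>x'\<in>unit_cube d.
              \<bar>f x - f x'\<bar> \<le> L * (sqrt (\<Sum>i<d. (x i - x' i)\<^sup>2)) powr \<alpha>))"

end

theory Submission
  imports Defs
begin


lemma fact_ge_3pow: "2 * 3 ^ k \<le> (fact (k + 2) :: real)"
proof (induction k)
  case 0 then show ?case by simp
next
  case (Suc k)
  have e: "fact (Suc k + 2) = (real k + 3) * (fact (k + 2)::real)"
    using fact_Suc[of "k+2", where 'a=real] by (simp add: add.commute)
  have "(2::real) * 3 ^ Suc k = 3 * (2 * 3^k)" by simp
  also have "\<dots> \<le> 3 * fact (k+2)" by (rule mult_left_mono[OF Suc.IH]) simp
  also have "\<dots> \<le> (real k + 3) * fact (k+2)" by (intro mult_right_mono) auto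
  finally show ?case using e by (simp add: add.commute)
qed

lemma exp_bernstein:
  fixes l :: real assumes "0 \<le> l" "l < 3"
  shows "exp l - 1 - l \<le> l^2 / (2 * (1 - l/3))"
proof -
  have s1: "(\<lambda>n. inverse (fact (n + 2)) *\<^sub>R (l ^ (n + 2))) sums (exp l - 1 - l)"
  proof -
    have "summable (\<lambda>n. inverse (fact (n + 2)) *\<^sub>R (l ^ (n + 2)))"
      using summable_ignore_initial_segment[OF summable_exp_generic[of l], of 2] by simp
    then show ?thesis using exp_first_two_terms[of l] by (simp add: summable_sums_iff)
  qed
  have s2: "(\<lambda>n. l^2/2 * (l/3)^n) sums (l^2/2 * (1 / (1 - l/3)))"
    by (intro sums_mult geometric_sums) (use assms in auto)
  have le: "inverse (fact (n + 2)) *\<^sub>R (l ^ (n + 2)) \<le> l^2/2 * (l/3)^n" for n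
  proof -
    have "inverse (fact (n + 2)) *\<^sub>R (l ^ (n + 2)) = l^2 * l^n / fact (n+2)"
      by (simp add: power_add power2_eq_square divide_inverse mult_ac)
    also have "\<dots> \<le> l^2 * l^n / (2 * 3^n)"
      by (intro divide_left_mono fact_ge_3pow) (use assms in auto)
    also have "\<dots> = l^2/2 * (l/3)^n" by (simp add: power_divide)
    finally show ?thesis .
  qed
  have "exp l - 1 - l \<le> l^2/2 * (1 / (1 - l/3))"
    using sums_le[OF _ s1 s2] le by blast
  then show ?thesis by (simp add: field_simps)
qed

lemma exp_neg_le: fixes l :: real assumes "0 \<le> l" shows "exp (-l) - 1 + l \<le> exp l - 1 - l"
proof -
  have "exp (-0) + 2*0 - exp 0 \<ge> exp (-l) + 2*l - exp l"
  proof (rule DERIV_nonpos_imp_nonincreasing[where f="\<lambda>y. exp (-y) + 2*y - exp y"])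
    fix x :: real assume "0 \<le> x" "x \<le> l"
    show "\<exists>D. ((\<lambda>y. exp (-y) + 2*y - exp y) has_real_derivative D) (at x) \<and> D \<le> 0"
    proof (intro exI conjI)
      show "((\<lambda>y. exp (-y) + 2*y - exp y) has_real_derivative (- exp (-x) + 2 - exp x)) (at x)"
        by (auto intro!: derivative_eq_intros)
      have "2 \<le> exp (-x) + exp x"
        using exp_ge_add_one_self[of x] exp_ge_add_one_self[of "-x"] by linarith
      then show "- exp (-x) + 2 - exp x \<le> 0" by simp
    qed
  qed (use assms in auto)
  then show ?thesis by simp
qed


lemma mgf_single:
  assumes P: "prob_space P" and E: "E \<in> sets P"
  shows "(\<integral>\<^sup>+ z. ennreal (exp (l * indicator E z)) \<partial>P) = ennreal (1 + measure P E * (exp l - 1))"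
proof -
  interpret prob_space P by fact
  have "(\<integral>\<^sup>+ z. ennreal (exp (l * indicator E z)) \<partial>P)
      = (\<integral>\<^sup>+ z. ennreal (exp l) * indicator E z + indicator (space P - E) z \<partial>P)"
    by (intro nn_integral_cong) (auto split: split_indicator)
  also have "\<dots> = ennreal (exp l) * emeasure P E + emeasure P (space P - E)"
    using E by (subst nn_integral_add) (auto simp: nn_integral_cmult_indicator)
  also have "\<dots> = ennreal (exp l * measure P E + (1 - measure P E))"
    using E by (simp add: emeasure_eq_measure prob_compl ennreal_mult ennreal_plus[symmetric])
  finally show ?thesis by (simp add: algebra_simps)
qed

lemma mgf_count:
  assumes P: "prob_space P" and E: "E \<in> sets P"
  shows "(\<integral>\<^sup>+ Z. ennreal (exp (l * (\<Sum>i<n. indicator E (Z i)))) \<partial>PiM {..<n} (\<lambda>_. P))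
     = ennreal ((1 + measure P E * (exp l - 1)) ^ n)"
proof -
  interpret prob_space P by fact
  interpret product_sigma_finite "\<lambda>_. P" by standard
  have "(\<integral>\<^sup>+ Z. ennreal (exp (l * (\<Sum>i<n. indicator E (Z i)))) \<partial>PiM {..<n} (\<lambda>_. P))
      = (\<integral>\<^sup>+ Z. (\<Prod>i\<in>{..<n}. (\<lambda>i z. ennreal (exp (l * indicator E z))) i (Z i)) \<partial>PiM {..<n} (\<lambda>_. P))"
  proof (intro nn_integral_cong)
    fix Z
    have "ennreal (exp (l * (\<Sum>i<n. indicator E (Z i)))) = ennreal (\<Prod>i<n. exp (l * indicator E (Z i)))"
      by (simp only: sum_distrib_left exp_sum[OF finite_lessThan])
    also have "\<dots> = (\<Prod>i<n. ennreal (exp (l * indicator E (Z i))))"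
      by (rule prod_ennreal[symmetric]) simp
    finally show "ennreal (exp (l * (\<Sum>i<n. indicator E (Z i)))) = (\<Prod>i\<in>{..<n}. (\<lambda>i z. ennreal (exp (l * indicator E z))) i (Z i))" by simp
  qed
  also have "\<dots> = (\<Prod>i\<in>{..<n}. \<integral>\<^sup>+ z. ennreal (exp (l * indicator E z)) \<partial>P)"
    using E by (intro product_nn_integral_prod) auto
  also have "\<dots> = ennreal ((1 + measure P E * (exp l - 1)) ^ n)"
  proof -
    have "0 \<le> 1 + measure P E * (exp l - 1)"
    proof -
      have "1 + measure P E * (exp l - 1) = (1 - measure P E) + measure P E * exp l"
        by (simp add: algebra_simps)
      moreover have "0 \<le> 1 - measure P E" "0 \<le> measure P E * exp l" by auto
    ultimately show ?thesis by linarith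
    qed
    then show ?thesis by (simp add: mgf_single[OF P E] ennreal_power)
  qed
  finally show ?thesis .
qed

lemma chernoff_gen:
  fixes n :: nat
  assumes P: "prob_space P" and E: "E \<in> sets P"
  shows "measure (PiM {..<n} (\<lambda>_. P)) {Z \<in> space (PiM {..<n} (\<lambda>_. P)). c \<le> l * (\<Sum>i<n. indicator E (Z i))}
     \<le> exp (real n * measure P E * (exp l - 1) - c)"
proof -
  interpret prob_space P by fact
  let ?M = "PiM {..<n} (\<lambda>_. P)"
  interpret M: prob_space ?M by (intro prob_space_PiM) (simp add: prob_space_axioms)
  let ?S = "\<lambda>Z. (\<Sum>i<n. indicator E (Z i)) :: real"
  let ?A = "{Z \<in> space ?M. c \<le> l * ?S Z}"
  have [measurable]: "E \<in> sets P" by fact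
  have q: "1 + measure P E * (exp l - 1) \<le> exp (measure P E * (exp l - 1))"
    by simp
  have q0: "0 \<le> 1 + measure P E * (exp l - 1)"
  proof -
    have "1 + measure P E * (exp l - 1) = (1 - measure P E) + measure P E * exp l"
      by (simp add: algebra_simps)
    moreover have "0 \<le> 1 - measure P E" "0 \<le> measure P E * exp l" by auto
    ultimately show ?thesis by linarith
  qed
  have "emeasure ?M ?A = (\<integral>\<^sup>+ Z. indicator ?A Z \<partial>?M)"
    by (intro nn_integral_indicator[symmetric]) measurable
  also have "\<dots> \<le> (\<integral>\<^sup>+ Z. ennreal (exp (- c)) * ennreal (exp (l * ?S Z)) \<partial>?M)"
  proof (intro nn_integral_mono)
    fix Z assume "Z \<in> space ?M"
    show "indicator ?A Z \<le> ennreal (exp (- c)) * ennreal (exp (l * ?S Z))"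
    proof (cases "Z \<in> ?A")
      case True
      then have "1 \<le> exp (l * ?S Z - c)" by simp
      then show ?thesis using True by (simp add: ennreal_mult[symmetric] exp_diff exp_minus field_simps)
    qed simp
  qed
  also have "\<dots> = ennreal (exp (- c)) * (\<integral>\<^sup>+ Z. ennreal (exp (l * ?S Z)) \<partial>?M)"
    by (intro nn_integral_cmult) measurable
  also have "\<dots> = ennreal (exp (- c) * (1 + measure P E * (exp l - 1)) ^ n)"
    using q0 by (simp add: mgf_count[OF P E] ennreal_mult)
  also have "\<dots> \<le> ennreal (exp (- c) * exp (measure P E * (exp l - 1)) ^ n)"
    by (intro ennreal_leI mult_left_mono power_mono q q0) auto
  also have "\<dots> = ennreal (exp (n * measure P E * (exp l - 1) - c))"
    by (simp add: exp_of_nat_mult[symmetric] exp_diff exp_minus exp_add field_simps)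
  finally show ?thesis
    by (simp add: M.emeasure_eq_measure)
qed


lemma bern_arith:
  fixes V x w u l :: real
  assumes V: "0 < V" and x: "0 \<le> x" and w: "0 \<le> w" "w \<le> V"
    and u: "u = sqrt (2 * V * x) + 2 * x / 3" and l: "l = u / (V + u / 3)"
  shows "w * (exp l - 1) - l * (w + u) \<le> - x"
    and "w * (exp (-l) - 1) - (-l) * (w - u) \<le> - x"
proof -
  have "0 \<le> sqrt (2 * V * x)" using V x by simp
  then have u0: "0 \<le> u" using u x by linarith
  have D: "0 < V + u/3" using V u0 by linarith
  have l0: "0 \<le> l" using l u0 D by simp
  have l3: "l < 3"
  proof -
    have "u < 3 * (V + u/3)" using V by (simp add: algebra_simps)
    then show ?thesis using l D by (simp add: divide_less_eq)
  qed
  have g0: "0 \<le> exp l - 1 - l" using exp_ge_add_one_self[of l] by linarith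
  have key: "V * (l^2 / (2 * (1 - l/3))) - l * u = - (u^2 / (2 * (V + u/3)))"
  proof -
    have e: "1 - l/3 = V / (V + u/3)" using l D by (simp add: field_simps)
    have h1: "l * (V + u/3) = u" using l D by simp
    have "l^2 / (2 * (1 - l/3)) = l^2 * (V + u/3) / (2 * V)" unfolding e using V D by (simp add: field_simps)
    then have "V * (l^2 / (2 * (1 - l/3))) = l * (l * (V + u/3)) / 2" using V by (simp add: power2_eq_square)
    also have "\<dots> = l * u / 2" using h1 by simp
    finally have A: "V * (l^2 / (2 * (1 - l/3))) - l * u = - (l * u / 2)" by linarith
    have lu: "l * u = u^2 / (V + u/3)" using l by (simp add: power2_eq_square)
    have "- (l * u / 2) = - (u^2 / (2 * (V + u/3)))" unfolding lu by simp
    then show ?thesis using A by linarith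
  qed
  have sq: "(sqrt (2 * V * x))^2 = 2 * V * x" using V x by simp
  have "u^2 - 2 * V * x - 2 * u * x / 3 = sqrt (2 * V * x) * (2 * x / 3)"
    unfolding u using sq by (simp add: power2_eq_square algebra_simps)
  also have "\<dots> \<ge> 0" using x V by simp
  finally have "u^2 \<ge> 2 * x * (V + u/3)" by (simp add: algebra_simps)
  then have fin: "- (u^2 / (2 * (V + u/3))) \<le> - x"
    using D by (simp add: field_simps)
  have B: "exp l - 1 - l \<le> l^2 / (2 * (1 - l/3))" by (rule exp_bernstein[OF l0 l3])
  have "w * (exp l - 1 - l) \<le> V * (exp l - 1 - l)" by (intro mult_right_mono w g0)
  also have "\<dots> \<le> V * (l^2 / (2 * (1 - l/3)))" using B V by (intro mult_left_mono) auto
  finally have W: "w * (exp l - 1 - l) \<le> V * (l^2 / (2 * (1 - l/3)))" .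
  show "w * (exp l - 1) - l * (w + u) \<le> - x"
    using W key fin by (simp add: algebra_simps)
  have N: "w * (exp (-l) - 1 + l) \<le> w * (exp l - 1 - l)"
    by (intro mult_left_mono exp_neg_le l0 w)
  show "w * (exp (-l) - 1) - (-l) * (w - u) \<le> - x"
    using N W key fin by (simp add: algebra_simps)
qed



lemma S_card: fixes n :: nat shows "(\<Sum>i<n. indicator E (Z i) :: real) = real (card ({..<n} \<inter> {i. Z i \<in> E}))"
  unfolding indicator_def by (rule sum_of_bool_eq) simp_all

lemma cell_bound:
  fixes n :: nat and x c :: real
  assumes P: "prob_space P" and E: "E \<in> sets P" and n: "2 \<le> n"
    and v: "measure P E \<le> c" "0 < c" and x: "0 \<le> x" and ex: "exp (-x) \<le> 1 / real n ^ 5"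
  shows "measure (PiM {..<n} (\<lambda>_. P)) {Z \<in> space (PiM {..<n} (\<lambda>_. P)).
      sqrt (2*c*x/n) + 2*x/(3*n) + 4/n < \<bar>(\<Sum>i<n. indicator E (Z i)) / n - measure P E\<bar>}
      \<le> 4 * measure P E / real n ^ 3"
proof -
  interpret prob_space P by fact
  let ?M = "PiM {..<n} (\<lambda>_. P)"
  interpret M: prob_space ?M by (intro prob_space_PiM) (simp add: prob_space_axioms)
  have [measurable]: "E \<in> sets P" by fact
  define q where "q = measure P E"
  define S where "S = (\<lambda>Z. (\<Sum>i<n. indicator E (Z i)) :: real)"
  define B where "B = sqrt (2*c*x/n) + 2*x/(3*n) + 4/n"
  define A where "A = {Z \<in> space ?M. B < \<bar>S Z / n - q\<bar>}"
  have n0: "0 < real n" using n by simp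
  have q0: "0 \<le> q" unfolding q_def by simp
  have S0: "0 \<le> S Z" for Z unfolding S_def by (simp add: sum_nonneg)
  have sqrt0: "0 \<le> sqrt (2*c*x/n)" using v x by simp
  have B4: "4 / n \<le> B" unfolding B_def using sqrt0 x n0 by simp
  have goal_eq: "?thesis = (measure ?M A \<le> 4 * q / real n ^ 3)"
    unfolding A_def B_def S_def q_def by simp
  have AS: "\<bar>S Z - n * q\<bar> > n * B" if "Z \<in> A" for Z
  proof -
    have "B < \<bar>S Z / n - q\<bar>" using that A_def by auto
    then have "n * B < n * \<bar>S Z / n - q\<bar>" using n0 by simp
    also have "n * \<bar>S Z / n - q\<bar> = \<bar>n * (S Z / n - q)\<bar>"
      using n0 by (simp add: abs_mult)
    also have "n * (S Z / n - q) = S Z - n * q"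
      using n0 by (simp add: field_simps)
    finally show ?thesis .
  qed
  show ?thesis unfolding goal_eq
  proof (cases "q \<ge> 1 / real n ^ 2")
    case True
    define V where "V = n * c"
    define u where "u = sqrt (2 * V * x) + 2 * x / 3"
    define l where "l = u / (V + u / 3)"
    have V0: "0 < V" unfolding V_def using v n0 by simp
    have wV: "n * q \<le> V" unfolding V_def q_def using v n0 by simp
    have w0: "0 \<le> n * q" using q0 by simp
    have u0: "0 \<le> u" unfolding u_def using V0 x by simp
    have l0: "0 \<le> l" unfolding l_def using u0 V0 by simp
    have nB: "u \<le> n * B"
    proof -
      have "sqrt (2 * V * x) = sqrt (n^2 * (2*c*x/n))"
        unfolding V_def using n0 by (simp add: power2_eq_square field_simps)
      also have "\<dots> = n * sqrt (2*c*x/n)"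
        using real_sqrt_mult[of "(real n)^2" "2*c*x/n"] by simp
      finally have "sqrt (2 * V * x) = n * sqrt (2*c*x/n)" .
      then have "n * B = u + 4" unfolding B_def u_def using n0 by (simp add: field_simps)
      then show ?thesis by simp
    qed
    define U1 where "U1 = {Z \<in> space ?M. l * (n * q + u) \<le> l * (\<Sum>i<n. indicator E (Z i))}"
    define U2 where "U2 = {Z \<in> space ?M. - l * (n * q - u) \<le> - l * (\<Sum>i<n. indicator E (Z i))}"
    have sub: "A \<subseteq> U1 \<union> U2"
    proof
      fix Z assume Z: "Z \<in> A"
      then have Zs: "Z \<in> space ?M" unfolding A_def by auto
      have "\<bar>S Z - n * q\<bar> > u" using AS[OF Z] nB by linarith
      then have "S Z \<ge> n * q + u \<or> S Z \<le> n * q - u" by linarith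
      then show "Z \<in> U1 \<union> U2"
      proof
        assume "S Z \<ge> n * q + u"
        then have "l * (n * q + u) \<le> l * S Z" using l0 by (intro mult_left_mono)
        then show ?thesis using Zs unfolding U1_def S_def by simp
      next
        assume "S Z \<le> n * q - u"
        then have "l * S Z \<le> l * (n * q - u)" using l0 by (intro mult_left_mono)
        then show ?thesis using Zs unfolding U2_def S_def by simp
      qed
    qed
    have U1m: "U1 \<in> sets ?M" unfolding U1_def by measurable
    have U2m: "U2 \<in> sets ?M" unfolding U2_def by measurable
    have "measure ?M A \<le> measure ?M (U1 \<union> U2)"
      using sub U1m U2m by (intro M.finite_measure_mono) auto
    also have "\<dots> \<le> measure ?M U1 + measure ?M U2"
      using U1m U2m by (rule measure_Un_le)
    also have "\<dots> \<le> exp (real n * q * (exp l - 1) - l * (n * q + u))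
                  + exp (real n * q * (exp (-l) - 1) - (- l * (n * q - u)))"
      unfolding U1_def U2_def q_def
      by (intro add_mono chernoff_gen[OF P E])
    also have "\<dots> \<le> exp (-x) + exp (-x)"
      using bern_arith[OF V0 x w0 wV u_def l_def] by (intro add_mono) auto
    also have "\<dots> \<le> 2 / real n ^ 5" using ex by simp
    also have "\<dots> \<le> 4 * q / real n ^ 3"
    proof -
      have "2 / real n ^ 5 \<le> 4 * (1 / real n ^ 2) / real n ^ 3"
        using n0 by (simp add: field_simps power_add[symmetric])
      also have "\<dots> \<le> 4 * q / real n ^ 3"
        using True n0 by (intro divide_right_mono mult_left_mono) auto
      finally show ?thesis .
    qed
    finally show "measure ?M A \<le> 4 * q / real n ^ 3" .
  next
    case False
    then have qs: "q < 1 / real n ^ 2" by simp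
    have A5: "5 \<le> S Z" if "Z \<in> A" for Z
    proof (rule ccontr)
      assume "\<not> 5 \<le> S Z"
      then have "card ({..<n} \<inter> {i. Z i \<in> E}) < 5" unfolding S_def S_card by linarith
      then have "S Z \<le> 4" unfolding S_def S_card by linarith
      then have "S Z / n \<le> 4 / n" using n0 by (simp add: divide_right_mono)
      then have c1: "S Z / n - q \<le> 4 / n" using q0 by linarith
      have "1 / real n ^ 2 \<le> 4 / n" using n0 n
        by (simp add: field_simps power2_eq_square)
      then have c2: "q - S Z / n \<le> 4 / n" using qs S0[of Z] n0 by (smt (verit) divide_nonneg_nonneg)
      have "\<bar>S Z / n - q\<bar> \<le> B" using c1 c2 B4 by linarith
      then show False using that unfolding A_def by auto
    qed
    have subl: "A \<subseteq> {Z \<in> space ?M. l * 5 \<le> l * (\<Sum>i<n. indicator E (Z i))}" if "0 \<le> l" for l :: real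
    proof
      fix Z assume Z: "Z \<in> A"
      then have "l * 5 \<le> l * S Z" using A5 that by (intro mult_left_mono) auto
      then show "Z \<in> {Z \<in> space ?M. l * 5 \<le> l * (\<Sum>i<n. indicator E (Z i))}"
        using Z unfolding A_def S_def by auto
    qed
    have bnd: "measure ?M A \<le> exp (real n * q * (exp l - 1) - l * 5)" if "0 \<le> l" for l :: real
    proof -
      have "measure ?M A \<le> measure ?M {Z \<in> space ?M. l * 5 \<le> l * (\<Sum>i<n. indicator E (Z i))}"
        using subl[OF that] by (intro M.finite_measure_mono) measurable
      also have "\<dots> \<le> exp (real n * q * (exp l - 1) - l * 5)"
        unfolding q_def by (rule chernoff_gen[OF P E])
      finally show ?thesis .
    qed
    show "measure ?M A \<le> 4 * q / real n ^ 3"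
    proof (cases "q = 0")
      case True
      have "measure ?M A \<le> 0"
      proof (rule ccontr)
        assume "\<not> measure ?M A \<le> 0"
        then have pos: "0 < measure ?M A" by simp
        define l where "l = - ln (measure ?M A) / 5 + 1"
        have "ln (measure ?M A) \<le> 0" using pos by simp
        then have l0: "0 \<le> l" unfolding l_def by simp
        have "measure ?M A \<le> exp (- (l * 5))" using bnd[OF l0] True by simp
        also have "\<dots> < exp (ln (measure ?M A))"
          unfolding l_def by (subst exp_less_cancel_iff) (simp add: algebra_simps)
        also have "\<dots> = measure ?M A" using pos by simp
        finally show False by simp
      qed
      then show ?thesis using True by simp
    next
      case qn0: False
      then have qp: "0 < q" using q0 by simp
      have nq1: "n * q < 1"
      proof -
        have "n * q < n * (1 / real n ^ 2)" using qs n0 by (intro mult_strict_left_mono) auto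
        also have "\<dots> = 1 / n" by (simp add: power2_eq_square)
        also have "\<dots> \<le> 1" using n by simp
        finally show ?thesis .
      qed
      have nqp: "0 < n * q" using qp n0 by simp
      define l where "l = - ln (n * q)"
      have l0: "0 \<le> l" unfolding l_def using nq1 nqp by simp
      have el: "exp l = 1 / (n * q)" unfolding l_def using nqp by (simp add: exp_minus inverse_eq_divide)
      have e5: "exp (- (l * 5)) = (n * q) ^ 5"
      proof -
        have "exp (- (l * 5)) = exp (real 5 * ln (n * q))" unfolding l_def by simp
        also have "\<dots> = exp (ln (n * q)) ^ 5" by (rule exp_of_nat_mult)
        also have "\<dots> = (n * q) ^ 5" using nqp by simp
        finally show ?thesis .
      qed
      have "measure ?M A \<le> exp (real n * q * (exp l - 1) - l * 5)" by (rule bnd[OF l0])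
      also have "real n * q * (exp l - 1) = 1 - n * q" unfolding el using nqp n0 qp by (simp add: field_simps)
      also have "exp (1 - n * q - l * 5) \<le> exp (1 - l * 5)" using nqp by simp
      also have "\<dots> = exp 1 * (n * q) ^ 5" using e5 by (simp add: exp_diff exp_minus field_simps)
      also have "\<dots> \<le> 3 * (n * q) ^ 5"
        using exp_le nqp by (intro mult_right_mono) auto
      also have "\<dots> = 3 * n ^ 5 * q ^ 4 * q" by (simp add: power_mult_distrib power_Suc2[symmetric] del: power_Suc)
      also have "\<dots> \<le> 3 * n ^ 5 * (1 / real n ^ 2) ^ 4 * q"
        using qs q0 qp by (intro mult_right_mono mult_left_mono power_mono) auto
      also have "\<dots> = 3 * q / real n ^ 3" using n0 by (simp add: field_simps power_mult[symmetric] power_add[symmetric])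
      also have "\<dots> \<le> 4 * q / real n ^ 3" using q0 n0 by (simp add: divide_right_mono)
      finally show ?thesis .
    qed
  qed
qed



lemma maxedge_inv:
  assumes "maxedge_cell d s p a b"
  shows "\<exists>kv jv. (\<Sum>i\<in>{s..<d}. kv i) = p \<and> (\<forall>i\<in>{s..<d}. \<forall>i'\<in>{s..<d}. kv i \<le> kv i' + 1) \<and>
    (\<forall>i\<in>{s..<d}. b i = a i + 1 / 2 ^ kv i \<and> a i = real (jv i) / 2 ^ kv i \<and> jv i < (2::nat) ^ kv i)"
  using assms
proof induction
  case root
  show ?case by (rule exI[of _ "\<lambda>_. 0"], rule exI[of _ "\<lambda>_. 0"]) simp
next
  case (left p a b j)
  from left.IH obtain kv jv where S: "(\<Sum>i\<in>{s..<d}. kv i) = p"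
    and bal: "\<forall>i\<in>{s..<d}. \<forall>i'\<in>{s..<d}. kv i \<le> kv i' + 1"
    and W: "\<forall>i\<in>{s..<d}. b i = a i + 1 / 2 ^ kv i \<and> a i = real (jv i) / 2 ^ kv i \<and> jv i < (2::nat) ^ kv i"
    by blast
  have minj: "kv j \<le> kv i" if i: "i \<in> {s..<d}" for i
  proof (rule ccontr)
    assume "\<not> kv j \<le> kv i"
    then have "(2::real) ^ kv i < 2 ^ kv j" by (intro power_strict_increasing) auto
    then have lt: "1 / (2::real) ^ kv j < 1 / 2 ^ kv i" by (intro divide_strict_left_mono) auto
    have "b i - a i \<le> Max ((\<lambda>i. b i - a i) ` {s..<d})" using i by (intro Max_ge) auto
    then show False using lt W i left.hyps(2,3) by auto
  qed
  let ?kv = "\<lambda>i. kv i + (if i = j then 1 else 0)"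
  let ?jv = "\<lambda>i. if i = j then 2 * jv i else jv i"
  show ?case
  proof (rule exI[of _ ?kv], rule exI[of _ ?jv], intro conjI)
    show "(\<Sum>i\<in>{s..<d}. ?kv i) = Suc p"
      using S left.hyps(2) by (simp add: sum.distrib)
  next
    show "\<forall>i\<in>{s..<d}. \<forall>i'\<in>{s..<d}. ?kv i \<le> ?kv i' + 1" using bal minj left.hyps(2) by fastforce
  next
    show "\<forall>i\<in>{s..<d}. (b(j := (a j + b j) / 2)) i = a i + 1 / 2 ^ ?kv i \<and> a i = real (?jv i) / 2 ^ ?kv i \<and> ?jv i < 2 ^ ?kv i"
    proof
    fix i assume i: "i \<in> {s..<d}"
    show "(b(j := (a j + b j) / 2)) i = a i + 1 / 2 ^ ?kv i \<and> a i = real (?jv i) / 2 ^ ?kv i \<and> ?jv i < 2 ^ ?kv i"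
    proof (cases "i = j")
      case True
      then show ?thesis using W i by (auto simp: field_simps)
    next
      case False
      then show ?thesis using W i by auto
    qed
    qed
  qed
next
  case (right p a b j)
  from right.IH obtain kv jv where S: "(\<Sum>i\<in>{s..<d}. kv i) = p"
    and bal: "\<forall>i\<in>{s..<d}. \<forall>i'\<in>{s..<d}. kv i \<le> kv i' + 1"
    and W: "\<forall>i\<in>{s..<d}. b i = a i + 1 / 2 ^ kv i \<and> a i = real (jv i) / 2 ^ kv i \<and> jv i < (2::nat) ^ kv i"
    by blast
  have minj: "kv j \<le> kv i" if i: "i \<in> {s..<d}" for i
  proof (rule ccontr)
    assume "\<not> kv j \<le> kv i"
    then have "(2::real) ^ kv i < 2 ^ kv j" by (intro power_strict_increasing) auto
    then have lt: "1 / (2::real) ^ kv j < 1 / 2 ^ kv i" by (intro divide_strict_left_mono) auto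
    have "b i - a i \<le> Max ((\<lambda>i. b i - a i) ` {s..<d})" using i by (intro Max_ge) auto
    then show False using lt W i right.hyps(2,3) by auto
  qed
  let ?kv = "\<lambda>i. kv i + (if i = j then 1 else 0)"
  let ?jv = "\<lambda>i. if i = j then 2 * jv i + 1 else jv i"
  show ?case
  proof (rule exI[of _ ?kv], rule exI[of _ ?jv], intro conjI)
    show "(\<Sum>i\<in>{s..<d}. ?kv i) = Suc p"
      using S right.hyps(2) by (simp add: sum.distrib)
  next
    show "\<forall>i\<in>{s..<d}. \<forall>i'\<in>{s..<d}. ?kv i \<le> ?kv i' + 1" using bal minj right.hyps(2) by fastforce
  next
    show "\<forall>i\<in>{s..<d}. b i = (a(j := (a j + b j) / 2)) i + 1 / 2 ^ ?kv i \<and> (a(j := (a j + b j) / 2)) i = real (?jv i) / 2 ^ ?kv i \<and> ?jv i < 2 ^ ?kv i"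
    proof
    fix i assume i: "i \<in> {s..<d}"
    show "b i = (a(j := (a j + b j) / 2)) i + 1 / 2 ^ ?kv i \<and> (a(j := (a j + b j) / 2)) i = real (?jv i) / 2 ^ ?kv i \<and> ?jv i < 2 ^ ?kv i"
    proof (cases "i = j")
      case True
      have h: "b j = a j + 1/2^kv j" "a j = real (jv j)/2^kv j" "jv j < 2^kv j"
        using W right.hyps(2) by auto
      have h1: "(a j + b j)/2 = real (2*jv j + 1) / 2^(kv j + 1)"
        using h(1,2) by (simp add: field_simps)
      have h2: "b j = (a j + b j)/2 + 1/2^(kv j + 1)" using h(1) by (simp add: field_simps)
      have h3: "2*jv j + 1 < 2^(kv j + 1)" using h(3) by simp
      show ?thesis using True h1 h2 h3 by (simp add: field_simps)
    next
      case False
      then show ?thesis using W i by auto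
    qed
    qed
  qed
qed

lemma balanced_div:
  fixes kv :: "nat \<Rightarrow> nat"
  assumes fin: "finite R" and ne: "R \<noteq> {}" and bal: "\<forall>i\<in>R. \<forall>i'\<in>R. kv i \<le> kv i' + 1"
  shows "\<forall>i\<in>R. kv i \<in> {(\<Sum>i\<in>R. kv i) div card R, Suc ((\<Sum>i\<in>R. kv i) div card R)}"
proof -
  define m where "m = Min (kv ` R)"
  obtain i0 where i0: "i0 \<in> R" "kv i0 = m" unfolding m_def using fin ne
    by (metis (mono_tags, lifting) Min_in finite_imageI image_iff image_is_empty)
  have ge: "m \<le> kv i" if "i \<in> R" for i unfolding m_def using fin that by simp
  have le: "kv i \<le> Suc m" if "i \<in> R" for i using bal that i0 by fastforce
  have "card R * m \<le> (\<Sum>i\<in>R. kv i)"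
    using sum_mono[of R "\<lambda>_. m" kv] ge by simp
  moreover have "(\<Sum>i\<in>R. kv i) < card R * Suc m"
  proof -
    have "(\<Sum>i\<in>R. kv i) < (\<Sum>i\<in>R. Suc m)"
      by (rule sum_strict_mono_ex1) (use fin le i0 in auto)
    then show ?thesis by simp
  qed
  ultimately have "(\<Sum>i\<in>R. kv i) div card R = m" by (intro div_nat_eqI)
  then show ?thesis using ge le by fastforce
qed



definition boxf :: "nat \<Rightarrow> nat \<Rightarrow> (nat \<Rightarrow> nat) \<Rightarrow> (nat \<Rightarrow> nat) \<Rightarrow> (nat \<Rightarrow> nat) \<Rightarrow> nat \<Rightarrow> real set" where
  "boxf s t kv m jv i = (if i < s then {real (m i) / real t ..< (real (m i) + 1) / real t}
      else {real (jv i) / 2 ^ kv i ..< (real (jv i) + 1) / 2 ^ kv i})"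

definition box :: "nat \<Rightarrow> nat \<Rightarrow> nat \<Rightarrow> (nat \<Rightarrow> nat) \<Rightarrow> (nat \<Rightarrow> nat) \<Rightarrow> (nat \<Rightarrow> nat) \<Rightarrow> (nat \<Rightarrow> real) set" where
  "box d s t kv m jv = PiE {..<d} (boxf s t kv m jv)"

definition Kset :: "nat \<Rightarrow> nat \<Rightarrow> nat \<Rightarrow> (nat \<Rightarrow> nat) set" where
  "Kset d s p = PiE {s..<d} (\<lambda>_. {p div (d - s), Suc (p div (d - s))})"

definition Mset :: "nat \<Rightarrow> nat \<Rightarrow> (nat \<Rightarrow> nat) set" where
  "Mset s t = PiE {..<s} (\<lambda>_. {..<t})"

definition Jset :: "nat \<Rightarrow> nat \<Rightarrow> (nat \<Rightarrow> nat) \<Rightarrow> (nat \<Rightarrow> nat) set" where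
  "Jset d s kv = PiE {s..<d} (\<lambda>i. {..<2 ^ kv i})"

lemma finite_Mset: "finite (Mset s t)" unfolding Mset_def by (intro finite_PiE) auto
lemma finite_Jset: "finite (Jset d s kv)" unfolding Jset_def by (intro finite_PiE) auto
lemma finite_Kset: "finite (Kset d s p)" unfolding Kset_def by (intro finite_PiE) auto
lemma card_Kset: "s < d \<Longrightarrow> card (Kset d s p) \<le> 2 ^ d"
proof -
  assume "s < d"
  have "card (Kset d s p) = 2 ^ (d - s)" unfolding Kset_def by (simp add: card_PiE numeral_2_eq_2)
  also have "\<dots> \<le> 2 ^ d" by (intro power_increasing) auto
  finally show ?thesis .
qed

lemma space_Xspace: "space (Xspace d) = PiE {..<d} (\<lambda>_. UNIV)"
  by (simp add: space_PiM)

lemma cell_struct: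
  assumes C: "C \<in> cells d s t p" and sd: "s < d"
  shows "\<exists>kv m jv. kv \<in> Kset d s p \<and> m \<in> Mset s t \<and> jv \<in> Jset d s kv \<and>
            C = box d s t kv m jv \<and> (\<Sum>i\<in>{s..<d}. kv i) = p"
proof -
  from C obtain m a b where m: "\<forall>i<s. m i < t" and me: "maxedge_cell d s p a b"
    and Ceq: "C = {x \<in> space (Xspace d).
         (\<forall>i<s. real (m i) / real t \<le> x i \<and> x i < (real (m i) + 1) / real t) \<and>
         (\<forall>i\<in>{s..<d}. a i \<le> x i \<and> x i < b i)}"
    unfolding cells_def by blast
  from maxedge_inv[OF me] obtain kv jv where S: "(\<Sum>i\<in>{s..<d}. kv i) = p"
    and bal: "\<forall>i\<in>{s..<d}. \<forall>i'\<in>{s..<d}. kv i \<le> kv i' + 1"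
    and W: "\<forall>i\<in>{s..<d}. b i = a i + 1 / 2 ^ kv i \<and> a i = real (jv i) / 2 ^ kv i \<and> jv i < (2::nat) ^ kv i"
    by blast
  define kv' where "kv' = restrict kv {s..<d}"
  define m' where "m' = restrict m {..<s}"
  define jv' where "jv' = restrict jv {s..<d}"
  have bd: "\<forall>i\<in>{s..<d}. kv i \<in> {p div (d - s), Suc (p div (d - s))}"
    using balanced_div[of "{s..<d}" kv] bal sd S by simp
  have K: "kv' \<in> Kset d s p" unfolding kv'_def Kset_def using bd by auto
  have M: "m' \<in> Mset s t" unfolding m'_def Mset_def using m by auto
  have J: "jv' \<in> Jset d s kv'" unfolding jv'_def Jset_def kv'_def using W by auto
  have S': "(\<Sum>i\<in>{s..<d}. kv' i) = p" unfolding kv'_def using S by simp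
  have eq: "C = box d s t kv' m' jv'"
  proof (rule set_eqI)
    fix x
    have ab: "\<And>i. i \<in> {s..<d} \<Longrightarrow> a i = real (jv i) / 2 ^ kv i \<and> b i = (real (jv i) + 1) / 2 ^ kv i"
      using W by (simp add: add_divide_distrib)
    show "x \<in> C \<longleftrightarrow> x \<in> box d s t kv' m' jv'"
    proof
      assume "x \<in> C"
      then have x: "x \<in> PiE {..<d} (\<lambda>_. UNIV)"
        "\<forall>i<s. real (m i) / real t \<le> x i \<and> x i < (real (m i) + 1) / real t"
        "\<forall>i\<in>{s..<d}. a i \<le> x i \<and> x i < b i"
        unfolding Ceq space_Xspace by auto
      show "x \<in> box d s t kv' m' jv'"
        unfolding box_def boxf_def PiE_iff
      proof (intro conjI ballI)
        fix i assume i: "i \<in> {..<d}"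
        show "x i \<in> (if i < s then {real (m' i) / real t..<(real (m' i) + 1) / real t}
             else {real (jv' i) / 2 ^ kv' i..<(real (jv' i) + 1) / 2 ^ kv' i})"
        proof (cases "i < s")
          case True then show ?thesis using x(2) unfolding m'_def by auto
        next
          case False then have "i \<in> {s..<d}" using i by auto
          then show ?thesis using False x(3) ab unfolding jv'_def kv'_def by auto
        qed
      next
        show "x \<in> extensional {..<d}" using x(1) by (simp add: PiE_iff)
      qed
    next
      assume x: "x \<in> box d s t kv' m' jv'"
      then have x1: "x \<in> PiE {..<d} (\<lambda>_. UNIV)" unfolding box_def by (auto simp: PiE_iff)
      have x2: "x i \<in> boxf s t kv' m' jv' i" if "i < d" for i
        using x that unfolding box_def by auto
      have "\<forall>i<s. real (m i) / real t \<le> x i \<and> x i < (real (m i) + 1) / real t"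
      proof (intro allI impI)
        fix i assume "i < s"
        then have "i < d" using sd by simp
        from x2[OF this] \<open>i < s\<close> show "real (m i) / real t \<le> x i \<and> x i < (real (m i) + 1) / real t"
          unfolding boxf_def m'_def by auto
      qed
      moreover have "\<forall>i\<in>{s..<d}. a i \<le> x i \<and> x i < b i"
      proof
        fix i assume i: "i \<in> {s..<d}"
        then show "a i \<le> x i \<and> x i < b i" using x2[of i] ab[OF i]
          unfolding boxf_def jv'_def kv'_def by auto
      qed
      ultimately show "x \<in> C" unfolding Ceq space_Xspace using x1 by auto
    qed
  qed
  show ?thesis using K M J eq S' by blast
qed

lemma box_sets: "box d s t kv m jv \<in> sets (Xspace d)"
  unfolding box_def by (intro sets_PiM_I_finite) (auto simp: boxf_def)

lemma ival_eq:
  fixes a b :: nat and c y :: real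
  assumes "0 < c" "real a / c \<le> y" "y < (real b + 1) / c" "real b / c \<le> y" "y < (real a + 1) / c"
  shows "a = b"
proof -
  have "real a / c < (real b + 1) / c" using assms by linarith
  then have "real a / c * c < (real b + 1) / c * c" using assms(1) by (rule mult_strict_right_mono)
  then have "real a < real b + 1" using assms(1) by simp
  moreover have "real b / c < (real a + 1) / c" using assms by linarith
  then have "real b / c * c < (real a + 1) / c * c" using assms(1) by (rule mult_strict_right_mono)
  then have "real b < real a + 1" using assms(1) by simp
  ultimately show ?thesis by linarith
qed

lemma box_disjoint:
  assumes t: "1 \<le> t" and sd: "s < d"
  shows "disjoint_family_on (\<lambda>(m, jv). box d s t kv m jv) (Mset s t \<times> Jset d s kv)"
proof (unfold disjoint_family_on_def, intro ballI impI)
  fix u w assume u: "u \<in> Mset s t \<times> Jset d s kv" and w: "w \<in> Mset s t \<times> Jset d s kv" and ne: "u \<noteq> w"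
  obtain m jv where [simp]: "u = (m, jv)" by (cases u)
  obtain m' jv' where [simp]: "w = (m', jv')" by (cases w)
  show "(case u of (m, jv) \<Rightarrow> box d s t kv m jv) \<inter> (case w of (m, jv) \<Rightarrow> box d s t kv m jv) = {}"
  proof (rule ccontr)
    assume "(case u of (m, jv) \<Rightarrow> box d s t kv m jv) \<inter> (case w of (m, jv) \<Rightarrow> box d s t kv m jv) \<noteq> {}"
    then obtain x where x1: "x \<in> box d s t kv m jv" and x2: "x \<in> box d s t kv m' jv'" by auto
    have b1: "x i \<in> boxf s t kv m jv i" "x i \<in> boxf s t kv m' jv' i" if "i < d" for i
      using x1 x2 that unfolding box_def by auto
    have "m i = m' i" if i: "i \<in> {..<s}" for i
    proof -
      have "i < d" using i sd by auto
      from b1[OF this] i show ?thesis unfolding boxf_def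
        by (intro ival_eq[of "real t" "m i" "x i" "m' i"]) (use t in auto)
    qed
    then have "m = m'" using u w by (intro PiE_ext[of m "{..<s}" "\<lambda>_. {..<t}" m']) (auto simp: Mset_def)
    moreover have "jv i = jv' i" if i: "i \<in> {s..<d}" for i
    proof -
      have "i < d" "\<not> i < s" using i by auto
      from b1[OF this(1)] this(2) show ?thesis unfolding boxf_def
        by (intro ival_eq[of "2 ^ kv i" "jv i" "x i" "jv' i"]) auto
    qed
    then have "jv = jv'" using u w by (intro PiE_ext[of jv "{s..<d}" "\<lambda>i. {..<2 ^ kv i}" jv']) (auto simp: Jset_def)
    ultimately show False using ne by simp
  qed
qed

lemma ddd: "(x + 1) / c - x / c = 1 / (c::real)"
  by (metis add_diff_cancel_left' diff_divide_distrib add.commute)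

lemma box_lebesgue:
  assumes sd: "s < d" and t: "1 \<le> t" and S: "(\<Sum>i\<in>{s..<d}. kv i) = p"
  shows "emeasure (Xspace d) (box d s t kv m jv) = ennreal ((1 / real t) ^ s * (1 / 2) ^ p)"
proof -
  interpret product_sigma_finite "\<lambda>_::nat. lborel :: real measure"
    by (unfold product_sigma_finite_def) (simp add: sigma_finite_lborel)
  have len: "emeasure lborel (boxf s t kv m jv i) = ennreal (if i < s then 1 / real t else 1 / 2 ^ kv i)" for i
  proof (cases "i < s")
    case True
    have "real (m i) / real t \<le> (real (m i) + 1) / real t" by (intro divide_right_mono) auto
    then show ?thesis using True by (simp add: boxf_def ddd)
  next
    case False
    have "real (jv i) / 2 ^ kv i \<le> (real (jv i) + 1) / 2 ^ kv i" by (intro divide_right_mono) auto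
    then show ?thesis using False by (simp add: boxf_def ddd)
  qed
  have "emeasure (Xspace d) (box d s t kv m jv) = (\<Prod>i\<in>{..<d}. emeasure lborel (boxf s t kv m jv i))"
    unfolding box_def by (intro emeasure_PiM) (auto simp: boxf_def)
  also have "\<dots> = (\<Prod>i\<in>{..<d}. ennreal (if i < s then 1 / real t else 1 / 2 ^ kv i))"
    using len by simp
  also have "\<dots> = ennreal (\<Prod>i\<in>{..<d}. (if i < s then 1 / real t else 1 / 2 ^ kv i))"
    by (intro prod_ennreal) auto
  also have "(\<Prod>i\<in>{..<d}. (if i < s then 1 / real t else 1 / 2 ^ kv i)) = (1 / real t) ^ s * (1 / 2) ^ p"
  proof -
    have U: "{..<d} = {..<s} \<union> {s..<d}" using sd by auto
    have "(\<Prod>i\<in>{..<d}. (if i < s then 1 / real t else 1 / 2 ^ kv i))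
        = (\<Prod>i\<in>{..<s}. (if i < s then 1 / real t else 1 / 2 ^ kv i)) * (\<Prod>i\<in>{s..<d}. (if i < s then 1 / real t else 1 / 2 ^ kv i))"
      unfolding U by (intro prod.union_disjoint) auto
    also have "(\<Prod>i\<in>{..<s}. (if i < s then 1 / real t else 1 / 2 ^ kv i)) = (1 / real t) ^ s"
      by simp
    also have "(\<Prod>i\<in>{s..<d}. (if i < s then 1 / real t else 1 / 2 ^ kv i)) = (\<Prod>i\<in>{s..<d}. (1/2::real) ^ kv i)"
      by (intro prod.cong) (auto simp: power_one_over)
    also have "\<dots> = (1/2) ^ p" unfolding S[symmetric] by (rule power_sum[symmetric])
    finally show ?thesis .
  qed
  finally show ?thesis .
qed



lemma sum_cells:
  assumes Q: "prob_space Q" and sQ: "sets Q = sets (Xspace d)" and sd: "s < d" and t: "1 \<le> t"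
  shows "finite (cells d s t p)" "(\<Sum>C\<in>cells d s t p. measure Q C) \<le> 2 ^ d"
proof -
  interpret Q: prob_space Q by fact
  define I where "I = Sigma (Kset d s p) (\<lambda>kv. Mset s t \<times> Jset d s kv)"
  define h where "h = (\<lambda>(kv, m, jv). box d s t kv m jv)"
  have finI: "finite I" unfolding I_def
    by (intro finite_SigmaI finite_Kset finite_cartesian_product finite_Mset finite_Jset)
  have sub: "cells d s t p \<subseteq> h ` I"
  proof
    fix C assume "C \<in> cells d s t p"
    from cell_struct[OF this sd] obtain kv m jv where "kv \<in> Kset d s p" "m \<in> Mset s t" "jv \<in> Jset d s kv"
      "C = box d s t kv m jv" by blast
    then show "C \<in> h ` I" unfolding I_def h_def by (intro image_eqI[of _ _ "(kv, m, jv)"]) auto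
  qed
  show fin: "finite (cells d s t p)" using sub finI by (meson finite_surj)
  have "(\<Sum>C\<in>cells d s t p. measure Q C) \<le> (\<Sum>C\<in>h ` I. measure Q C)"
    using sub finI by (intro sum_mono2) auto
  also have "\<dots> \<le> (\<Sum>z\<in>I. measure Q (h z))"
    using sum_image_le[OF finI, of "\<lambda>C. measure Q C" h] by (simp add: o_def)
  also have "\<dots> = (\<Sum>kv\<in>Kset d s p. \<Sum>mj\<in>Mset s t \<times> Jset d s kv. measure Q (h (kv, mj)))"
    unfolding I_def
    by (subst sum.Sigma) (auto intro: finite_Kset finite_Mset finite_Jset simp: case_prod_beta)
  also have "\<dots> \<le> (\<Sum>kv\<in>Kset d s p. 1)"
  proof (intro sum_mono)
    fix kv assume "kv \<in> Kset d s p"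
    have "(\<Sum>mj\<in>Mset s t \<times> Jset d s kv. measure Q (h (kv, mj)))
        = measure Q (\<Union>mj\<in>Mset s t \<times> Jset d s kv. (\<lambda>(m, jv). box d s t kv m jv) mj)"
      unfolding h_def
      by (subst Q.finite_measure_finite_Union)
         (auto intro!: box_disjoint[OF t sd] finite_Mset finite_Jset simp: sQ box_sets case_prod_beta)
    also have "\<dots> \<le> 1" by simp
    finally show "(\<Sum>mj\<in>Mset s t \<times> Jset d s kv. measure Q (h (kv, mj))) \<le> 1" .
  qed
  also have "\<dots> = real (card (Kset d s p))" by simp
  also have "\<dots> \<le> 2 ^ d" using card_Kset[OF sd, of p] by (simp add: numeral_2_eq_2 of_nat_le_iff[symmetric])
  finally show "(\<Sum>C\<in>cells d s t p. measure Q C) \<le> 2 ^ d" .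
qed

lemma cells_sets: "C \<in> cells d s t p \<Longrightarrow> s < d \<Longrightarrow> C \<in> sets (Xspace d)"
  using cell_struct[of C d s t p] box_sets by auto

lemma cell_measure:
  assumes sd: "s < d" and t: "1 \<le> t" and C: "C \<in> cells d s t p"
    and g: "g \<in> borel_measurable (Xspace d)" and gle: "\<And>x. g x \<le> c" "\<And>x. 0 \<le> g x"
    and fin: "emeasure (density (Xspace d) (\<lambda>x. ennreal (g x))) C < \<infinity>"
  shows "measure (density (Xspace d) (\<lambda>x. ennreal (g x))) C \<le> c * (1 / real t ^ s) * 2 powr (- real p)"
proof -
  from cell_struct[OF C sd] obtain kv m jv where S: "(\<Sum>i\<in>{s..<d}. kv i) = p" and Ceq: "C = box d s t kv m jv"
    by blast
  have c0: "0 \<le> c" using gle[of undefined] by linarith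
  have Cs: "C \<in> sets (Xspace d)" using Ceq box_sets by simp
  have "emeasure (density (Xspace d) (\<lambda>x. ennreal (g x))) C = (\<integral>\<^sup>+ x. ennreal (g x) * indicator C x \<partial>Xspace d)"
    using g Cs by (intro emeasure_density) auto
  also have "\<dots> \<le> (\<integral>\<^sup>+ x. ennreal c * indicator C x \<partial>Xspace d)"
    using gle by (intro nn_integral_mono) (auto simp: ennreal_leI split: split_indicator)
  also have "\<dots> = ennreal c * emeasure (Xspace d) C"
    using Cs by (simp add: nn_integral_cmult_indicator)
  also have "\<dots> = ennreal (c * ((1 / real t) ^ s * (1 / 2) ^ p))"
    unfolding Ceq box_lebesgue[OF sd t S] using c0 by (simp add: ennreal_mult)
  finally have le: "emeasure (density (Xspace d) (\<lambda>x. ennreal (g x))) C \<le> ennreal (c * ((1 / real t) ^ s * (1 / 2) ^ p))" .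
  have "measure (density (Xspace d) (\<lambda>x. ennreal (g x))) C \<le> c * ((1 / real t) ^ s * (1 / 2) ^ p)"
    unfolding measure_def using le c0 by (intro enn2real_leI) auto
  also have "c * ((1 / real t) ^ s * (1 / 2) ^ p) = c * (1 / real t ^ s) * 2 powr (- real p)"
    by (simp add: power_one_over powr_minus_divide powr_realpow)
  finally show ?thesis .
qed



lemma bad_meas:
  assumes [measurable]: "E \<in> sets P"
  shows "{Z \<in> space (PiM {..<n} (\<lambda>_. P)). (B::real) < \<bar>(\<Sum>i<n. indicator E (Z i)) / real n - q\<bar>}
           \<in> sets (PiM {..<n} (\<lambda>_. P))"
  by measurable

theorem lemma4:
  fixes d :: nat
  assumes "d \<ge> 1"
  shows "\<exists>N::nat. \<forall>n\<ge>N. \<forall>P M c_lo c_hi s t p.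
     assumption_A d P M c_lo c_hi \<longrightarrow> s < d \<longrightarrow> t \<ge> 1 \<longrightarrow>
     measure (PiM {..<n} (\<lambda>_. P))
       {Z \<in> space (PiM {..<n} (\<lambda>_. P)). \<forall>C\<in>cells d s t p.
          \<bar>(\<Sum>i<n. indicator C (fst (Z i))) / real n - measure (distr P (Xspace d) fst) C\<bar>
          \<le> sqrt (c_hi * (1 / real t ^ s) * 2 powr (1 - real p) * (4 * real d + 5) * ln (real n)
                   / real n)
            + 2 * (4 * real d + 5) * ln (real n) / (3 * real n) + 4 / real n}
     \<ge> 1 - 1 / (real n)\<^sup>2"
proof (intro exI[of _ "2 ^ (d + 2)"] allI impI)
  fix n :: nat and P :: "((nat \<Rightarrow> real) \<times> real) measure" and M c_lo c_hi :: real and s t p :: nat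
  assume nN: "2 ^ (d + 2) \<le> n" and AA: "assumption_A d P M c_lo c_hi" and sd: "s < d" and t: "1 \<le> t"
  have Pp: "prob_space P" and sP: "sets P = sets (Xspace d \<Otimes>\<^sub>M lborel)"
    and clo: "0 < c_lo" "c_lo \<le> c_hi"
    using AA unfolding assumption_A_def by auto
  from AA obtain g where g: "g \<in> borel_measurable (Xspace d)"
    and gd: "distr P (Xspace d) fst = density (Xspace d) (\<lambda>x. ennreal (g x))"
    and g0: "\<forall>x. x \<notin> unit_cube d \<longrightarrow> g x = 0"
    and g1: "\<forall>x\<in>unit_cube d. c_lo \<le> g x \<and> g x \<le> c_hi"
    unfolding assumption_A_def by blast
  interpret prob_space P by fact
  have gle: "g x \<le> c_hi" "0 \<le> g x" for x
  proof -
    have "g x \<le> c_hi \<and> 0 \<le> g x"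
    proof (cases "x \<in> unit_cube d")
      case True then show ?thesis using g1 clo by fastforce
    next
      case False then show ?thesis using g0 clo by simp
    qed
    then show "g x \<le> c_hi" "0 \<le> g x" by auto
  qed
  have fstm[measurable]: "fst \<in> P \<rightarrow>\<^sub>M Xspace d"
    using measurable_cong_sets[OF sP refl, of "Xspace d"] measurable_fst by blast
  define Q where "Q = distr P (Xspace d) fst"
  have Qp: "prob_space Q" unfolding Q_def by (rule prob_space_distr[OF fstm])
  have sQ: "sets Q = sets (Xspace d)" unfolding Q_def by simp
  let ?M = "PiM {..<n} (\<lambda>_. P)"
  interpret MM: prob_space ?M by (intro prob_space_PiM) (simp add: prob_space_axioms)
  have n4: "4 * 2 ^ d \<le> n" using nN by (simp add: power_add mult.commute)
  have "4 \<le> 4 * (2::nat) ^ d" by simp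
  then have n2: "2 \<le> n" using n4 by linarith
  have n0: "0 < real n" using n2 by simp
  define x where "x = (4 * real d + 5) * ln (real n)"
  have x0: "0 \<le> x" unfolding x_def using n2 by simp
  have ex: "exp (- x) \<le> 1 / real n ^ 5"
  proof -
    have "exp (- x) = real n powr (- (4 * real d + 5))"
      unfolding x_def powr_def using n0 by (simp add: algebra_simps)
    also have "\<dots> \<le> real n powr (- 5)" using n2 by (intro powr_mono) auto
    also have "\<dots> = 1 / real n ^ 5"
    proof -
      have "real n powr (real 5) = real n ^ 5" by (rule powr_realpow[OF n0])
      then show ?thesis by (simp add: powr_minus_divide)
    qed
    finally show ?thesis .
  qed
  define v where "v = c_hi * (1 / real t ^ s) * 2 powr (- real p)"
  have v0: "0 < v" unfolding v_def using clo t by simp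
  have sqrt_eq: "c_hi * (1 / real t ^ s) * 2 powr (1 - real p) * (4 * real d + 5) * ln (real n) / real n
       = 2 * v * x / real n"
    unfolding v_def x_def by (simp add: powr_diff powr_minus_divide)
  define E where "E = (\<lambda>C. fst -` C \<inter> space P)"
  have Es: "E C \<in> sets P" if "C \<in> cells d s t p" for C
    unfolding E_def using cells_sets[OF that sd] by measurable
  have qE: "measure Q C = measure P (E C)" if "C \<in> cells d s t p" for C
    unfolding Q_def E_def using cells_sets[OF that sd] by (intro measure_distr fstm)
  have qv: "measure P (E C) \<le> v" if C: "C \<in> cells d s t p" for C
  proof -
    have "measure Q C \<le> v"
      unfolding Q_def gd v_def
    proof (rule cell_measure[OF sd t C g gle])
      interpret Qi: prob_space Q by (fact Qp)
      show "emeasure (density (Xspace d) (\<lambda>x. ennreal (g x))) C < \<infinity>"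
        using Qi.emeasure_finite[of C] unfolding Q_def gd by (simp add: less_top)
    qed
    then show ?thesis using qE[OF C] by simp
  qed
  define B where "B = sqrt (2 * v * x / n) + 2*x/(3*n) + 4/n"
  define bad where "bad = (\<lambda>C. {Z \<in> space ?M. B < \<bar>(\<Sum>i<n. indicator (E C) (Z i)) / real n - measure P (E C)\<bar>})"
  have badm: "bad C \<in> sets ?M" if "C \<in> cells d s t p" for C
    unfolding bad_def by (rule bad_meas[OF Es[OF that]])
  have badb: "measure ?M (bad C) \<le> 4 * measure P (E C) / real n ^ 3" if C: "C \<in> cells d s t p" for C
    unfolding bad_def B_def by (rule cell_bound[OF Pp Es[OF C] n2 qv[OF C] v0 x0 ex])
  have finC: "finite (cells d s t p)" and sumC: "(\<Sum>C\<in>cells d s t p. measure Q C) \<le> 2 ^ d"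
    using sum_cells[OF Qp sQ sd t] by auto
  have Gset: "{Z \<in> space ?M. \<forall>C\<in>cells d s t p.
          \<bar>(\<Sum>i<n. indicator C (fst (Z i))) / real n - measure (distr P (Xspace d) fst) C\<bar>
          \<le> sqrt (c_hi * (1 / real t ^ s) * 2 powr (1 - real p) * (4 * real d + 5) * ln (real n)
                   / real n)
            + 2 * (4 * real d + 5) * ln (real n) / (3 * real n) + 4 / real n}
      = space ?M - (\<Union>C\<in>cells d s t p. bad C)"
  proof -
    have ind: "indicator C (fst (Z i)) = (indicator (E C) (Z i) :: real)" if "Z \<in> space ?M" "i < n" for Z C i
    proof -
      have "Z i \<in> space P" using that by (auto simp: space_PiM PiE_iff)
      then show ?thesis unfolding E_def by (simp split: split_indicator)
    qed
    have B': "sqrt (c_hi * (1 / real t ^ s) * 2 powr (1 - real p) * (4 * real d + 5) * ln (real n)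
                   / real n)
            + 2 * (4 * real d + 5) * ln (real n) / (3 * real n) + 4 / real n = B"
      unfolding sqrt_eq B_def x_def by simp
    have eqC: "\<bar>(\<Sum>i<n. indicator C (fst (Z i))) / real n - measure Q C\<bar>
         = \<bar>(\<Sum>i<n. indicator (E C) (Z i)) / real n - measure P (E C)\<bar>"
      if Z: "Z \<in> space ?M" and C: "C \<in> cells d s t p" for Z C
    proof -
      have "(\<Sum>i<n. indicator C (fst (Z i))) = (\<Sum>i<n. indicator (E C) (Z i) :: real)"
        by (rule sum.cong) (auto simp: ind[OF Z])
      then show ?thesis using qE[OF C] by simp
    qed
    show ?thesis
      unfolding B' bad_def Q_def[symmetric]
    proof (rule set_eqI)
      fix Z
      show "Z \<in> {Z \<in> space ?M. \<forall>C\<in>cells d s t p. \<bar>(\<Sum>i<n. indicator C (fst (Z i))) / real n - measure Q C\<bar> \<le> B}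
        \<longleftrightarrow> Z \<in> space ?M - (\<Union>C\<in>cells d s t p. {Z \<in> space ?M. B < \<bar>(\<Sum>i<n. indicator (E C) (Z i)) / real n - measure P (E C)\<bar>})"
      proof (cases "Z \<in> space ?M")
        case True
        then show ?thesis using eqC[OF True] by (auto simp: not_less)
      next
        case False
        then show ?thesis by auto
      qed
    qed
  qed
  have Um: "(\<Union>C\<in>cells d s t p. bad C) \<in> sets ?M"
    using finC badm by (intro sets.finite_UN) auto
  have "measure ?M (\<Union>C\<in>cells d s t p. bad C) \<le> (\<Sum>C\<in>cells d s t p. measure ?M (bad C))"
    using finC badm by (intro measure_UNION_le) auto
  also have "\<dots> \<le> (\<Sum>C\<in>cells d s t p. 4 * measure Q C / real n ^ 3)"
    using badb qE by (intro sum_mono) auto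
  also have "\<dots> = 4 / real n ^ 3 * (\<Sum>C\<in>cells d s t p. measure Q C)"
    by (simp add: sum_distrib_left sum_divide_distrib)
  also have "\<dots> \<le> 4 / real n ^ 3 * 2 ^ d"
    using sumC n0 by (intro mult_left_mono) auto
  also have "\<dots> \<le> 1 / (real n)\<^sup>2"
  proof -
    have "4 * 2 ^ d \<le> real n" using n4 by (metis of_nat_le_iff of_nat_mult of_nat_numeral of_nat_power)
    then have "4 / real n ^ 3 * 2 ^ d \<le> real n / real n ^ 3"
      using n0 by (simp add: divide_right_mono mult.commute)
    also have "\<dots> = 1 / (real n)\<^sup>2" using n0 by (simp add: power2_eq_square power3_eq_cube)
    finally show ?thesis .
  qed
  finally have U: "measure ?M (\<Union>C\<in>cells d s t p. bad C) \<le> 1 / (real n)\<^sup>2" .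
  show "1 - 1 / (real n)\<^sup>2 \<le> measure ?M {Z \<in> space ?M. \<forall>C\<in>cells d s t p.
          \<bar>(\<Sum>i<n. indicator C (fst (Z i))) / real n - measure (distr P (Xspace d) fst) C\<bar>
          \<le> sqrt (c_hi * (1 / real t ^ s) * 2 powr (1 - real p) * (4 * real d + 5) * ln (real n)
                   / real n)
            + 2 * (4 * real d + 5) * ln (real n) / (3 * real n) + 4 / real n}"
    unfolding Gset using MM.prob_compl[OF Um] U by simp
qed


end
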